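(* Let $a_0,a_1,a_2,b_0,b_1$ be real numbers with $a_1\neq0$ and $a_2\neq0$, and let $(T(n,k))_{n\ge 0,\,k\in\mathbb{Z}}$ be defined by $T(0,0)=1$, $T(n,k)=0$ whenever $k<0$ or $k>n$, and \[ T(n,k)=(a_2n+a_1k+a_0)\,T(n-1,k)+(b_1k+b_0)\,T(n-1,k-1)\qquad(n\ge1). \] Then for all integers $0\le k\le n$, \[ T(n,k)=\frac{\prod_{i=1}^{k}(b_0+ib_1)}{a_1^k\,k!}\sum_{j=0}^{k}(-1)^{k-j}\binom{k}{j}\prod_{r=1}^{n}(a_0+a_1j+ra_2). \]
   Context: Empty products equal $1$. *)

theory Defs
  imports Complex_Main
begin

end

theory Submission
  imports Defs
begin

definition Dk :: "nat \<Rightarrow> (nat \<Rightarrow> real) \<Rightarrow> real" where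
  "Dk k g = (\<Sum>j=0..k. (-1) ^ (k - j) * real (k choose j) * g j)"

lemma Dk_lin: "Dk k (\<lambda>j. c * g j + d * h j) = c * Dk k g + d * Dk k h"
  unfolding Dk_def by (simp add: sum.distrib sum_distrib_left algebra_simps)

lemma Dk_const: "Dk (Suc m) (\<lambda>_. 1) = 0"
proof -
  have "(1 + (-1::real)) ^ Suc m = (\<Sum>j\<le>Suc m. real (Suc m choose j) * 1 ^ j * (-1) ^ (Suc m - j))"
    by (rule binomial_ring)
  then show ?thesis unfolding Dk_def by (simp add: atMost_atLeast0 mult.commute)
qed

lemma term_id:
  assumes "j \<le> Suc m"
  shows "(-1::real) ^ (Suc m - j) * real (Suc m choose j) * (real j * g j) =
    real (Suc m) * ((-1) ^ (m - j) * real (m choose j) * g j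
      + (-1) ^ (Suc m - j) * real (Suc m choose j) * g j)"
proof (cases j)
  case 0
  then show ?thesis by simp
next
  case (Suc i)
  have e1: "real (Suc i) * real (Suc m choose Suc i) = real (Suc m) * real (m choose i)"
    by (metis Suc_times_binomial_eq of_nat_mult mult.commute)
  have e2: "real (Suc m choose Suc i) = real (m choose i) + real (m choose Suc i)" by simp
  show ?thesis
  proof (cases "i = m")
    case True
    then show ?thesis using Suc by simp
  next
    case False
    then have "i < m" using assms Suc by simp
    then have s: "(-1::real) ^ (m - Suc i) = - ((-1) ^ (m - i))"
    proof -
      have "m - i = Suc (m - Suc i)" using \<open>i < m\<close> by simp
      then show ?thesis by simp
    qed
    have "(-1::real) ^ (Suc m - Suc i) * real (Suc m choose Suc i) * (real (Suc i) * g (Suc i))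
        = (-1) ^ (m - i) * (real (Suc i) * real (Suc m choose Suc i)) * g (Suc i)" by simp
    also have "\<dots> = real (Suc m) * ((-1) ^ (m - i) * real (m choose i) * g (Suc i))"
      using e1 by simp
    also have "\<dots> = real (Suc m) * ((-1) ^ (m - Suc i) * real (m choose Suc i) * g (Suc i)
      + (-1) ^ (Suc m - Suc i) * real (Suc m choose Suc i) * g (Suc i))"
      using s e2 by (simp add: algebra_simps)
    finally show ?thesis using Suc by simp
  qed
qed

lemma Dk_mult_id: "Dk (Suc m) (\<lambda>j. real j * g j) = real (Suc m) * (Dk m g + Dk (Suc m) g)"
proof -
  have ext: "Dk m g = (\<Sum>j=0..Suc m. (-1) ^ (m - j) * real (m choose j) * g j)"
    unfolding Dk_def by simp
  show ?thesis
    unfolding ext unfolding Dk_def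
    by (simp only: sum.distrib[symmetric] sum_distrib_left) (rule sum.cong, simp, rule term_id, simp)
qed

definition ff :: "real \<Rightarrow> real \<Rightarrow> real \<Rightarrow> nat \<Rightarrow> nat \<Rightarrow> real" where
  "ff a0 a1 a2 n j = (\<Prod>r=1..n. a0 + a1 * real j + real r * a2)"

lemma ff_Suc: "ff a0 a1 a2 (Suc n) j = (a0 + real (Suc n) * a2) * ff a0 a1 a2 n j + a1 * (real j * ff a0 a1 a2 n j)"
  unfolding ff_def by (simp add: prod.nat_ivl_Suc' algebra_simps)

lemma S_rec0: "Dk 0 (ff a0 a1 a2 (Suc n)) = (a0 + real (Suc n) * a2) * Dk 0 (ff a0 a1 a2 n)"
  unfolding Dk_def using ff_Suc[of a0 a1 a2 n 0] by simp

lemma S_rec: "Dk (Suc m) (ff a0 a1 a2 (Suc n)) =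
   (a0 + real (Suc n) * a2 + a1 * real (Suc m)) * Dk (Suc m) (ff a0 a1 a2 n)
   + a1 * real (Suc m) * Dk m (ff a0 a1 a2 n)"
proof -
  have "Dk (Suc m) (ff a0 a1 a2 (Suc n)) = Dk (Suc m) (\<lambda>j. (a0 + real (Suc n) * a2) * ff a0 a1 a2 n j + a1 * (real j * ff a0 a1 a2 n j))"
    by (rule arg_cong[where f="Dk (Suc m)"], rule ext, rule ff_Suc)
  also have "\<dots> = (a0 + real (Suc n) * a2) * Dk (Suc m) (ff a0 a1 a2 n) + a1 * Dk (Suc m) (\<lambda>j. real j * ff a0 a1 a2 n j)"
    by (rule Dk_lin)
  also have "\<dots> = (a0 + real (Suc n) * a2) * Dk (Suc m) (ff a0 a1 a2 n) + a1 * (real (Suc m) * (Dk m (ff a0 a1 a2 n) + Dk (Suc m) (ff a0 a1 a2 n)))"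
    by (simp add: Dk_mult_id)
  finally show ?thesis by (simp add: algebra_simps)
qed

lemma S_vanish: "n < k \<Longrightarrow> Dk k (ff a0 a1 a2 n) = 0"
proof (induction n arbitrary: k)
  case 0
  then obtain m where "k = Suc m" by (cases k) auto
  moreover have "ff a0 a1 a2 0 = (\<lambda>_. 1)" by (simp add: ff_def fun_eq_iff)
  ultimately show ?case by (simp add: Dk_const)
next
  case (Suc n)
  then obtain m where k: "k = Suc m" by (cases k) auto
  then show ?case using Suc S_rec[of m a0 a1 a2 n] by simp
qed

lemma alg_help:
  fixes a A f s p q c X Y :: real
  assumes "a \<noteq> 0" "A \<noteq> 0" "f \<noteq> 0" "s \<noteq> 0"
  shows "p * q / (a * A * (s * f)) * (c * X + a * s * Y) = c * (p * q / (a * A * (s * f)) * X) + q * (p / (A * f) * Y)"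
  using assms by (simp add: field_simps)

theorem mainTheorem3:
  fixes a0 a1 a2 b0 b1 :: real and T :: "nat \<Rightarrow> int \<Rightarrow> real"
  assumes "a1 \<noteq> 0" and "a2 \<noteq> 0"
    and "T 0 0 = 1"
    and "\<And>n k. k < 0 \<or> k > int n \<Longrightarrow> T n k = 0"
    and "\<And>n k. n \<ge> 1 \<Longrightarrow> 0 \<le> k \<Longrightarrow> k \<le> int n \<Longrightarrow>
           T n k = (a2 * real n + a1 * of_int k + a0) * T (n - 1) k
                   + (b1 * of_int k + b0) * T (n - 1) (k - 1)"
    and "k \<le> n"
  shows "T n (int k) =
    (\<Prod>i=1..k. b0 + real i * b1) / (a1 ^ k * fact k) *
    (\<Sum>j=0..k. (-1) ^ (k - j) * real (k choose j) *
        (\<Prod>r=1..n. a0 + a1 * real j + real r * a2))"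
proof -
  define P where "P k = (\<Prod>i=1..k. b0 + real i * b1)" for k
  define F where "F n k = P k / (a1 ^ k * fact k) * Dk k (ff a0 a1 a2 n)" for n k
  have Fv: "F n k = 0" if "n < k" for n k
    unfolding F_def using S_vanish[OF that] by simp
  have main: "\<forall>k\<le>n. T n (int k) = F n k" for n
  proof (induction n)
    case 0
    then show ?case using assms(3) by (simp add: F_def P_def Dk_def ff_def)
  next
    case (Suc n)
    show ?case
    proof (intro allI impI)
      fix k assume kle: "k \<le> Suc n"
      show "T (Suc n) (int k) = F (Suc n) k"
      proof (cases k)
        case 0
        have "T (Suc n) 0 = (a2 * real (Suc n) + a0) * T n 0 + b0 * T n (-1)"
          using assms(5)[of "Suc n" 0] by simp
        also have "T n (-1) = 0" using assms(4) by simp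
        moreover have "T n 0 = F n 0" using Suc.IH by (metis of_nat_0 le0)
        ultimately show ?thesis using 0 S_rec0[of a0 a1 a2 n]
          by (simp add: F_def P_def)
      next
        case (Suc m)
        have r: "T (Suc n) (int (Suc m)) = (a2 * real (Suc n) + a1 * real (Suc m) + a0) * T n (int (Suc m))
            + (b1 * real (Suc m) + b0) * T n (int m)"
          using assms(5)[of "Suc n" "int (Suc m)"] kle Suc by simp
        have t1: "T n (int (Suc m)) = F n (Suc m)"
        proof (cases "Suc m \<le> n")
          case True then show ?thesis using Suc.IH by blast
        next
          case False then show ?thesis using Fv[of n "Suc m"] assms(4)[of "int (Suc m)" n] by simp
        qed
        have t2: "T n (int m) = F n m" using Suc.IH kle Suc by simp
        have P: "P (Suc m) = P m * (b0 + real (Suc m) * b1)"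
          unfolding P_def by (simp add: prod.nat_ivl_Suc')
        have "F (Suc n) (Suc m) = P (Suc m) / (a1 ^ Suc m * fact (Suc m)) *
           ((a0 + real (Suc n) * a2 + a1 * real (Suc m)) * Dk (Suc m) (ff a0 a1 a2 n)
             + a1 * real (Suc m) * Dk m (ff a0 a1 a2 n))"
          unfolding F_def S_rec ..
        also have "\<dots> = (a2 * real (Suc n) + a1 * real (Suc m) + a0) * F n (Suc m)
            + (b1 * real (Suc m) + b0) * F n m"
        proof -
          have fs: "fact (Suc m) = real (Suc m) * fact m" by simp
          have pw: "a1 ^ Suc m = a1 * a1 ^ m" by simp
          show ?thesis unfolding F_def P fs pw
            using alg_help[of a1 "a1 ^ m" "fact m" "real (Suc m)" "P m" "b0 + real (Suc m) * b1"
                "a0 + real (Suc n) * a2 + a1 * real (Suc m)" "Dk (Suc m) (ff a0 a1 a2 n)" "Dk m (ff a0 a1 a2 n)"]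
              assms(1) by (simp add: algebra_simps del: of_nat_Suc)
        qed
        finally show ?thesis using r t1 t2 Suc by simp
      qed
    qed
  qed
  have "T n (int k) = F n k" using main assms(6) by simp
  then show ?thesis unfolding F_def P_def Dk_def ff_def .
qed

end
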